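(* The assignment $A\mapsto F^2$, $B\mapsto F^{12}\,[F(F'')^{-1}]^2=\mathrm{diag}(1,-e^{i\pi/3},e^{2i\pi/3})$, $H_1\mapsto \tilde B E$, $H_3\mapsto E$ extends to a group isomorphism $Fr(162)=\mathcal N\rtimes\langle H_1,H_3\rangle\to D(9,1,1;2,1,1)=\langle F^2,[F(F'')^{-1}]^2\rangle\rtimes\langle \tilde B,E\rangle$. In particular $Fr(162)\cong D(9,1,1;2,1,1)$.
   Context: Let $\omega=e^{2i\pi/3}$. Define $G_1=\mathrm{diag}(e^{7i\pi/9},-e^{4i\pi/9},-e^{7i\pi/9})$, $G_2=\begin{pmatrix}-\tfrac12 e^{4i\pi/9}&\tfrac{1}{\sqrt2}e^{7i\pi/9}&\tfrac12 e^{4i\pi/9}\\ \tfrac{1}{\sqrt2}e^{7i\pi/9}&0&\tfrac{1}{\sqrt2}e^{7i\pi/9}\\ \tfrac12 e^{4i\pi/9}&\tfrac{1}{\sqrt2}e^{7i\pi/9}&-\tfrac12 e^{4i\pi/9}\end{pmatrix}$ and $Fr(162)=\langle G_1,G_2\rangle\subset SU(3)$. Let $A=G_1G_2^2G_1^{-1}=\tfrac12 e^{5i\pi/9}\begin{pmatrix}-1+e^{i\pi/3}&0&1+e^{i\pi/3}\\0&-2&0\\1+e^{i\pi/3}&0&-1+e^{i\pi/3}\end{pmatrix}$, $B=G_1G_2^{-2}G_1=\tfrac12\begin{pmatrix}1+\omega&0&-1+\omega\\0&-2e^{i\pi/3}&0\\-1+\omega&0&1+\omega\end{pmatrix}$,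 $\mathcal N=\langle A,B\rangle$, $H_1=\begin{pmatrix}-\frac12&-\frac1{\sqrt2}&-\frac12\\-\frac1{\sqrt2}&0&\frac1{\sqrt2}\\-\frac12&\frac1{\sqrt2}&-\frac12\end{pmatrix}$, $H_3=\begin{pmatrix}\frac12&\frac1{\sqrt2}&-\frac12\\\frac1{\sqrt2}&0&\frac1{\sqrt2}\\\frac12&-\frac1{\sqrt2}&-\frac12\end{pmatrix}$ (both in $Fr(162)$). Let $F=\mathrm{diag}(e^{i\pi/9},e^{i\pi/9},e^{-2i\pi/9})$, $F''=\mathrm{diag}(e^{-2i\pi/9},e^{i\pi/9},e^{i\pi/9})$, $E=\begin{pmatrix}0&1&0\\0&0&1\\1&0&0\end{pmatrix}$, $\tilde B=\begin{pmatrix}-1&0&0\\0&0&-1\\0&-1&0\end{pmatrix}$, and $D(9,1,1;2,1,1)=\langle F^2,E,\tilde B\rangle\subset SU(3)$. *)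

theory Defs
  imports "HOL-Analysis.Analysis" "HOL-Algebra.Algebra"
begin

type_synonym cmat = "complex^3^3"

definition mat3 :: "complex \<Rightarrow> complex \<Rightarrow> complex \<Rightarrow> complex \<Rightarrow> complex \<Rightarrow> complex
    \<Rightarrow> complex \<Rightarrow> complex \<Rightarrow> complex \<Rightarrow> cmat" where
  "mat3 a b c d e f g h i = vector [vector [a,b,c], vector [d,e,f], vector [g,h,i]]"

definition diag3 :: "complex \<Rightarrow> complex \<Rightarrow> complex \<Rightarrow> cmat" where
  "diag3 a b c = mat3 a 0 0 0 b 0 0 0 c"

definition GL3 :: "cmat monoid" where
  "GL3 = \<lparr>carrier = {M. invertible M}, mult = (**), one = mat 1\<rparr>"

definition gen :: "cmat set \<Rightarrow> cmat set" where
  "gen S = generate GL3 S"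

definition grp :: "cmat set \<Rightarrow> cmat monoid" where
  "grp H = GL3\<lparr>carrier := H\<rparr>"

definition "s2 = complex_of_real (1 / sqrt 2)"

definition "G1 = diag3 (cis (7*pi/9)) (- cis (4*pi/9)) (- cis (7*pi/9))"
definition "G2 = mat3
   (- cis (4*pi/9) / 2)  (s2 * cis (7*pi/9))  (cis (4*pi/9) / 2)
   (s2 * cis (7*pi/9))   0                    (s2 * cis (7*pi/9))
   (cis (4*pi/9) / 2)    (s2 * cis (7*pi/9))  (- cis (4*pi/9) / 2)"

definition "Fr162 = gen {G1, G2}"

definition "Amat = G1 ** (G2 ** G2) ** matrix_inv G1"
definition "Bmat = G1 ** matrix_inv (G2 ** G2) ** G1"
definition "Nsub = gen {Amat, Bmat}"

definition "H1 = mat3 (-1/2) (-s2) (-1/2)  (-s2) 0 s2  (-1/2) s2 (-1/2)"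
definition "H3 = mat3 (1/2) s2 (-1/2)  s2 0 s2  (1/2) (-s2) (-1/2)"
definition "Ksub = gen {H1, H3}"

definition "Fm = diag3 (cis (pi/9)) (cis (pi/9)) (cis (-2*pi/9))"
definition "Fpp = diag3 (cis (-2*pi/9)) (cis (pi/9)) (cis (pi/9))"
definition "Em = mat3 0 1 0  0 0 1  1 0 0"
definition "Bt = mat3 (-1) 0 0  0 0 (-1)  0 (-1) 0"

definition "D9 = gen {Fm ** Fm, Em, Bt}"
definition "Xm = (Fm ** matrix_inv Fpp) ** (Fm ** matrix_inv Fpp)"
definition "Nsub' = gen {Fm ** Fm, Xm}"
definition "Ksub' = gen {Bt, Em}"

end

theory Submission imports Defs begin
definition zz :: "int \<Rightarrow> complex" where "zz k = cis (of_int k * pi / 9)"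

lemma zz_mult: "zz a * zz b = zz (a + b)"
  unfolding zz_def by (simp add: cis_mult add_divide_distrib distrib_right)

lemma zz_nz[simp]: "zz a \<noteq> 0" unfolding zz_def by simp

lemma zz_18k: "zz (18 * k) = 1"
proof -
  have "of_int (18 * k) * pi / 9 = 2 * pi * of_int k" by simp
  moreover have "cis (2 * pi * of_int k) = 1" by (rule cis_multiple_2pi) simp
  ultimately show ?thesis unfolding zz_def by metis
qed
lemma zz_cong: assumes "a mod 18 = b mod 18" shows "zz a = zz b"
proof -
  from assms have "(18::int) dvd a - b" using mod_eq_dvd_iff by blast
  then obtain k where "a - b = 18 * k" by (rule dvdE)
  then have k: "a = b + 18 * k" by linarith
  then have "zz a = zz b * zz (18 * k)" by (simp add: zz_mult)
  then show ?thesis by (simp add: zz_18k)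
qed

lemma zz_pow: "zz a ^ n = zz (int n * a)"
proof -
  have "zz a ^ n = cis (real n * (of_int a * pi / 9))" unfolding zz_def by (rule Complex.DeMoivre)
  moreover have "real n * (of_int a * pi / 9) = of_int (int n * a) * pi / 9" by simp
  ultimately show ?thesis unfolding zz_def by metis
qed

lemma zz_0[simp]: "zz 0 = 1" unfolding zz_def by simp

lemma modI: "(x::int) - y = 18 * w \<Longrightarrow> x mod 18 = y mod 18"
  by (simp add: mod_eq_dvd_iff)

definition mmon :: "(3 \<Rightarrow> 3) \<Rightarrow> (3 \<Rightarrow> int) \<Rightarrow> cmat" where
  "mmon p e = (\<chi> i j. if j = p i then zz (e i) else 0)"

lemma mmon_mult: "mmon p e ** mmon q f = mmon (q \<circ> p) (\<lambda>i. e i + f (p i))"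
proof -
  have "(\<Sum>j\<in>UNIV. (if j = p i then zz (e i) else 0) * (if k = q j then zz (f j) else 0))
      = (if k = q (p i) then zz (e i + f (p i)) else 0)" for i k
  proof -
    have "(\<Sum>j\<in>UNIV. (if j = p i then zz (e i) else 0) * (if k = q j then zz (f j) else 0))
       = (\<Sum>j\<in>UNIV. if j = p i then zz (e i) * (if k = q j then zz (f j) else 0) else 0)"
      by (rule sum.cong) auto
    also have "\<dots> = zz (e i) * (if k = q (p i) then zz (f (p i)) else 0)"
      by simp
    finally show ?thesis by (simp add: zz_mult)
  qed
  then show ?thesis unfolding mmon_def matrix_matrix_mult_def by (simp add: vec_eq_iff)
qed

lemma mmon_eqI: "p = q \<Longrightarrow> (\<And>i. e i mod 18 = f i mod 18) \<Longrightarrow> mmon p e = mmon q f"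
proof -
  assume "p = q" "\<And>i. e i mod 18 = f i mod 18"
  then have "zz (e i) = zz (f i)" for i using zz_cong by blast
  then show ?thesis unfolding mmon_def \<open>p = q\<close> by (simp add: vec_eq_iff)
qed

lemma mmon_perm_eq: assumes "mmon p e = mmon q f" shows "p = q"
proof
  fix i
  have "mmon p e $ i $ p i \<noteq> 0" unfolding mmon_def by simp
  then have "mmon q f $ i $ p i \<noteq> 0" using assms by simp
  then show "p i = q i" unfolding mmon_def by (auto split: if_splits)
qed

lemma mmon_one: "mmon id (\<lambda>_. 0) = mat 1"
  unfolding mmon_def mat_def by (simp add: vec_eq_iff)

lemma group_GL3: "group GL3"
proof (rule groupI)
  show "\<And>x y. x \<in> carrier GL3 \<Longrightarrow> y \<in> carrier GL3 \<Longrightarrow> x \<otimes>\<^bsub>GL3\<^esub> y \<in> carrier GL3"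
    unfolding GL3_def by (simp add: invertible_mult)
  show "\<one>\<^bsub>GL3\<^esub> \<in> carrier GL3" unfolding GL3_def by (simp add: invertible_def)
  show "\<And>x y z. x \<in> carrier GL3 \<Longrightarrow> y \<in> carrier GL3 \<Longrightarrow> z \<in> carrier GL3 \<Longrightarrow>
      x \<otimes>\<^bsub>GL3\<^esub> y \<otimes>\<^bsub>GL3\<^esub> z = x \<otimes>\<^bsub>GL3\<^esub> (y \<otimes>\<^bsub>GL3\<^esub> z)"
    unfolding GL3_def by (simp add: matrix_mul_assoc)
  show "\<And>x. x \<in> carrier GL3 \<Longrightarrow> \<one>\<^bsub>GL3\<^esub> \<otimes>\<^bsub>GL3\<^esub> x = x"
    unfolding GL3_def by (simp add: matrix_mul_lid)
  show "\<And>x. x \<in> carrier GL3 \<Longrightarrow> \<exists>y\<in>carrier GL3. y \<otimes>\<^bsub>GL3\<^esub> x = \<one>\<^bsub>GL3\<^esub>"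
  proof -
    fix x assume "x \<in> carrier GL3"
    then obtain y where "x ** y = mat 1" "y ** x = mat 1" unfolding GL3_def invertible_def by auto
    then show "\<exists>y\<in>carrier GL3. y \<otimes>\<^bsub>GL3\<^esub> x = \<one>\<^bsub>GL3\<^esub>"
      unfolding GL3_def invertible_def by auto
  qed
qed

interpretation GL: group GL3 by (rule group_GL3)

lemma GL3_simps[simp]: "carrier GL3 = {M. invertible M}" "mult GL3 = (**)" "one GL3 = mat 1"
  unfolding GL3_def by auto

lemma GL_inv_eq: assumes "x ** y = mat 1" "y ** x = mat 1"
  shows "inv\<^bsub>GL3\<^esub> x = y"
proof -
  have "invertible x" "invertible y" using assms unfolding invertible_def by auto
  then show ?thesis using GL.inv_equality[of y x] assms by simp
qed

lemma matrix_inv_GL: assumes "invertible x" shows "matrix_inv x = inv\<^bsub>GL3\<^esub> x"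
proof -
  have c: "x \<in> carrier GL3" using assms by simp
  have e: "x ** inv\<^bsub>GL3\<^esub> x = mat 1 \<and> inv\<^bsub>GL3\<^esub> x ** x = mat 1"
    using GL.r_inv[OF c] GL.l_inv[OF c] by simp
  have "x ** matrix_inv x = mat 1 \<and> matrix_inv x ** x = mat 1"
    unfolding matrix_inv_def by (rule someI_ex) (use e in blast)
  then show ?thesis using GL_inv_eq by metis
qed

definition pinv :: "(3 \<Rightarrow> 3) \<Rightarrow> 3 \<Rightarrow> 3" where "pinv p = inv_into UNIV p"

lemma mmon_inv_mult:
  assumes "bij p"
  shows "mmon p e ** mmon (pinv p) (\<lambda>i. - e (pinv p i)) = mat 1"
        "mmon (pinv p) (\<lambda>i. - e (pinv p i)) ** mmon p e = mat 1"
proof -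
  have a: "pinv p (p i) = i" "p (pinv p i) = i" for i
    using assms unfolding pinv_def by (auto simp: bij_def inv_into_f_f f_inv_into_f)
  show "mmon p e ** mmon (pinv p) (\<lambda>i. - e (pinv p i)) = mat 1"
    unfolding mmon_mult mmon_one[symmetric] by (rule mmon_eqI) (auto simp: a)
  show "mmon (pinv p) (\<lambda>i. - e (pinv p i)) ** mmon p e = mat 1"
    unfolding mmon_mult mmon_one[symmetric] by (rule mmon_eqI) (auto simp: a)
qed

lemma mmon_invertible: "bij p \<Longrightarrow> invertible (mmon p e)"
  using mmon_inv_mult unfolding invertible_def by blast

lemma mmon_GLinv: "bij p \<Longrightarrow> inv\<^bsub>GL3\<^esub> (mmon p e) = mmon (pinv p) (\<lambda>i. - e (pinv p i))"
  using mmon_inv_mult GL_inv_eq by blast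

lemma bij_pinv: "bij p \<Longrightarrow> bij (pinv p)"
  unfolding pinv_def by (simp add: bij_imp_bij_inv)

definition MonSet :: "cmat set" where "MonSet = {mmon p e | p e. bij p}"

lemma MonSet_subgroup: "subgroup MonSet GL3"
proof (rule GL.subgroupI)
  show "MonSet \<subseteq> carrier GL3" unfolding MonSet_def using mmon_invertible by auto
  show "MonSet \<noteq> {}" unfolding MonSet_def by auto
  show "inv\<^bsub>GL3\<^esub> a \<in> MonSet" if "a \<in> MonSet" for a
    using that unfolding MonSet_def by (auto simp: mmon_GLinv) (use bij_pinv in blast)
  show "a \<otimes>\<^bsub>GL3\<^esub> b \<in> MonSet" if "a \<in> MonSet" "b \<in> MonSet" for a b
    using that unfolding MonSet_def by (auto simp: mmon_mult) (use bij_comp in blast)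
qed


lemma mat3_nth: "mat3 a b c d e f g h i $ 1 $ 1 = a" "mat3 a b c d e f g h i $ 1 $ 2 = b"
  "mat3 a b c d e f g h i $ 1 $ 3 = c" "mat3 a b c d e f g h i $ 2 $ 1 = d"
  "mat3 a b c d e f g h i $ 2 $ 2 = e" "mat3 a b c d e f g h i $ 2 $ 3 = f"
  "mat3 a b c d e f g h i $ 3 $ 1 = g" "mat3 a b c d e f g h i $ 3 $ 2 = h"
  "mat3 a b c d e f g h i $ 3 $ 3 = i"
  unfolding mat3_def by simp_all

lemma mat3_eq_iff: "(M = mat3 a b c d e f g h i) \<longleftrightarrow>
   M$1$1 = a \<and> M$1$2 = b \<and> M$1$3 = c \<and> M$2$1 = d \<and> M$2$2 = e \<and> M$2$3 = f \<and>
   M$3$1 = g \<and> M$3$2 = h \<and> M$3$3 = i"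
  by (auto simp: vec_eq_iff forall_3 mat3_nth)

lemma mat3_mult: "mat3 x1 x2 x3 x4 x5 x6 x7 x8 x9 ** mat3 y1 y2 y3 y4 y5 y6 y7 y8 y9 =
  mat3 (x1*y1+x2*y4+x3*y7) (x1*y2+x2*y5+x3*y8) (x1*y3+x2*y6+x3*y9)
       (x4*y1+x5*y4+x6*y7) (x4*y2+x5*y5+x6*y8) (x4*y3+x5*y6+x6*y9)
       (x7*y1+x8*y4+x9*y7) (x7*y2+x8*y5+x9*y8) (x7*y3+x8*y6+x9*y9)"
  unfolding mat3_eq_iff by (simp add: matrix_matrix_mult_def sum_3 mat3_nth)

lemma mat1_mat3: "mat 1 = mat3 1 0 0 0 1 0 0 0 1"
  unfolding mat3_eq_iff by (simp add: mat_def)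

definition pm :: "3 \<Rightarrow> 3 \<Rightarrow> 3 \<Rightarrow> 3 \<Rightarrow> 3" where
  "pm a b c = (\<lambda>i. if i = 1 then a else if i = 2 then b else c)"
definition ev :: "int \<Rightarrow> int \<Rightarrow> int \<Rightarrow> 3 \<Rightarrow> int" where
  "ev a b c = (\<lambda>i. if i = 1 then a else if i = 2 then b else c)"

lemma pm_app[simp]: "pm a b c 1 = a" "pm a b c 2 = b" "pm a b c 3 = c"
  unfolding pm_def by simp_all
lemma ev_app[simp]: "ev a b c 1 = a" "ev a b c 2 = b" "ev a b c 3 = c"
  unfolding ev_def by simp_all

lemma comp_pm: "q \<circ> pm a b c = pm (q a) (q b) (q c)"
  unfolding pm_def by (auto simp: fun_eq_iff)

lemma mmon_pm_mult: "mmon (pm a b c) (ev x y z) ** mmon (pm a' b' c') (ev x' y' z') =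
  mmon (pm (pm a' b' c' a) (pm a' b' c' b) (pm a' b' c' c))
       (ev (x + ev x' y' z' a) (y + ev x' y' z' b) (z + ev x' y' z' c))"
  unfolding mmon_mult comp_pm by (rule mmon_eqI) (auto simp: ev_def pm_def)

lemma mmon_pm_eqI: "a = a' \<Longrightarrow> b = b' \<Longrightarrow> c = c' \<Longrightarrow> x mod 18 = x' mod 18 \<Longrightarrow>
  y mod 18 = y' mod 18 \<Longrightarrow> z mod 18 = z' mod 18 \<Longrightarrow>
  mmon (pm a b c) (ev x y z) = mmon (pm a' b' c') (ev x' y' z')"
proof -
  assume h: "a = a'" "b = b'" "c = c'" "x mod 18 = x' mod 18" "y mod 18 = y' mod 18" "z mod 18 = z' mod 18"
  show ?thesis
  proof (rule mmon_eqI)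
    show "pm a b c = pm a' b' c'" using h by simp
    fix i show "ev x y z i mod 18 = ev x' y' z' i mod 18" using exhaust_3[of i] h by (elim disjE) simp_all
  qed
qed

lemma mmon_mat3: "mmon (pm a b c) (ev x y z) =
  mat3 (if a = 1 then zz x else 0) (if a = 2 then zz x else 0) (if a = 3 then zz x else 0)
       (if b = 1 then zz y else 0) (if b = 2 then zz y else 0) (if b = 3 then zz y else 0)
       (if c = 1 then zz z else 0) (if c = 2 then zz z else 0) (if c = 3 then zz z else 0)"
  unfolding mat3_eq_iff by (auto simp: mmon_def)

lemma bij_pm: "a \<noteq> b \<Longrightarrow> b \<noteq> c \<Longrightarrow> a \<noteq> c \<Longrightarrow> bij (pm a b c)"
proof -
  assume d: "a \<noteq> b" "b \<noteq> c" "a \<noteq> c"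
  have "inj (pm a b c)"
  proof (rule injI)
    fix i j assume "pm a b c i = pm a b c j"
    then show "i = j" using d exhaust_3[of i] exhaust_3[of j] by auto
  qed
  then show ?thesis using finite_UNIV_inj_surj[of "pm a b c"] by (simp add: bij_def)
qed

lemma mmon_one': "mat 1 = mmon (pm 1 2 3) (ev 0 0 0)"
  unfolding mmon_one[symmetric] by (rule mmon_eqI) (use exhaust_3 in \<open>auto simp: pm_def ev_def fun_eq_iff\<close>)

lemma mmon_inv_pm: assumes "mmon (pm a' b' c') (ev x' y' z') ** mmon (pm a b c) (ev x y z) = mat 1"
  "bij (pm a b c)" "bij (pm a' b' c')"
  shows "inv\<^bsub>GL3\<^esub> (mmon (pm a b c) (ev x y z)) = mmon (pm a' b' c') (ev x' y' z')"
  using GL.inv_equality[of "mmon (pm a' b' c') (ev x' y' z')" "mmon (pm a b c) (ev x y z)"] assms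
  by (simp add: mmon_invertible)

section \<open>The conjugating matrix\<close>

definition Um :: cmat where "Um = mat3 s2 0 s2 0 1 0 s2 0 (- s2)"

lemma s2sq: "s2 * s2 = 1/2"
proof -
  have "(1 / sqrt 2) * (1 / sqrt 2) = (1/2::real)" by (simp add: divide_simps)
  then have "complex_of_real ((1 / sqrt 2) * (1 / sqrt 2)) = 1/2" by simp
  then show ?thesis unfolding s2_def of_real_mult by simp
qed

lemma s2sq2: "s2 * (s2 * x) = x / 2"
  using s2sq by (metis mult.assoc mult.commute times_divide_eq_right mult_1)

lemma Um_sq: "Um ** Um = mat 1"
  unfolding Um_def mat3_mult mat1_mat3 by (simp add: s2sq)

definition cc :: "cmat \<Rightarrow> cmat" where "cc M = Um ** M ** Um"

lemma zz_9: "zz 9 = -1" unfolding zz_def by simp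
lemma zz_plus9: "zz (a + 9) = - zz a" using zz_mult[of a 9] by (simp add: zz_9)

lemma cis_zz: "cis (4*pi/9) = zz 4" "cis (7*pi/9) = zz 7" "cis (pi/9) = zz 1"
   "cis (-2*pi/9) = zz (-2)" "cis (pi/3) = zz 3" "cis (2*pi/3) = zz 6"
  unfolding zz_def by (simp_all add: field_simps)

definition "m1 = mmon (pm 3 2 1) (ev 7 13 7)"
definition "m2 = mmon (pm 2 1 3) (ev 7 7 13)"

lemma G1_cc: "G1 = cc m1"
proof -
  have "G1 = mat3 (zz 7) 0 0 0 (zz 13) 0 0 0 (zz 16)"
    unfolding G1_def diag3_def cis_zz using zz_plus9[of 4] zz_plus9[of 7] by simp
  also have "\<dots> = cc m1"
    unfolding cc_def m1_def Um_def mmon_mat3 mat3_mult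
    using zz_plus9[of 7]
    by (simp add: s2sq2)
  finally show ?thesis .
qed



lemma zz13: "zz 13 = - zz 4" using zz_plus9[of 4] by simp

lemma s2_rules: "s2 * x * s2 = x / 2" "zz k * s2 = s2 * zz k"
  using s2sq2[of x] by (simp_all add: mult.commute mult.left_commute)

lemma G2_cc: "G2 = cc m2"
proof -
  have "G2 = mat3 (- zz 4 / 2) (s2 * zz 7) (zz 4 / 2) (s2 * zz 7) 0 (s2 * zz 7) (zz 4 / 2) (s2 * zz 7) (- zz 4 / 2)"
    unfolding G2_def cis_zz by simp
  also have "\<dots> = cc m2"
    unfolding cc_def m2_def Um_def mmon_mat3 mat3_mult
    by (simp add: s2sq2 zz13 s2_rules)
  finally show ?thesis .
qed

definition "Btm = mmon (pm 1 3 2) (ev 9 9 9)"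
definition "Emm = mmon (pm 2 3 1) (ev 0 0 0)"
definition "E2m = mmon (pm 3 1 2) (ev 0 0 0)"

lemma H1_cc: "H1 = cc Btm"
  unfolding H1_def cc_def Btm_def Um_def mmon_mat3 mat3_mult
  by (simp add: s2sq2 zz_9 s2sq)

lemma H3_cc: "H3 = cc E2m"
  unfolding H3_def cc_def E2m_def Um_def mmon_mat3 mat3_mult
  by (simp add: s2sq2 s2sq)

lemma Bt_mmon: "Bt = Btm"
  unfolding Bt_def Btm_def mmon_mat3 by (simp add: zz_9)
lemma Em_mmon: "Em = Emm"
  unfolding Em_def Emm_def mmon_mat3 by simp
lemma Fm_mmon: "Fm = mmon (pm 1 2 3) (ev 1 1 (-2))"
  unfolding Fm_def diag3_def mmon_mat3 cis_zz by simp
lemma Fpp_mmon: "Fpp = mmon (pm 1 2 3) (ev (-2) 1 1)"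
  unfolding Fpp_def diag3_def mmon_mat3 cis_zz by simp


lemma grp_simps[simp]: "carrier (grp H) = H" "mult (grp H) = (**)" "one (grp H) = mat 1"
  unfolding grp_def GL3_def by auto

lemma grp_group: "subgroup H GL3 \<Longrightarrow> group (grp H)"
  unfolding grp_def by (rule GL.subgroup_imp_group)

lemma gen_sub: "S \<subseteq> carrier GL3 \<Longrightarrow> subgroup (gen S) GL3"
  unfolding gen_def by (rule GL.generate_is_subgroup)

lemma gen_mult: "x \<in> gen S \<Longrightarrow> y \<in> gen S \<Longrightarrow> x ** y \<in> gen S"
  unfolding gen_def using generate.eng[of x GL3 S y] by simp

lemma gen_incl: "x \<in> S \<Longrightarrow> x \<in> gen S"
  unfolding gen_def by (rule generate.incl)

lemma gen_min: "subgroup H GL3 \<Longrightarrow> S \<subseteq> H \<Longrightarrow> gen S \<subseteq> H"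
  unfolding gen_def by (rule GL.generate_subgroup_incl)

lemma gen_eqI: "S \<subseteq> carrier GL3 \<Longrightarrow> T \<subseteq> carrier GL3 \<Longrightarrow> S \<subseteq> gen T \<Longrightarrow> T \<subseteq> gen S \<Longrightarrow> gen S = gen T"
  using gen_min gen_sub by (metis subset_antisym)

lemma sub_pow: "subgroup H GL3 \<Longrightarrow> x \<in> H \<Longrightarrow> x [^]\<^bsub>GL3\<^esub> (n::nat) \<in> H"
  using subgroup.one_closed[of H GL3] subgroup.m_closed[of H GL3]
  by (induction n) auto

lemma sub_sub: assumes "subgroup H (grp G)" "subgroup G GL3" shows "subgroup H GL3"
proof (rule GL.subgroupI)
  have hs: "H \<subseteq> G" using subgroup.subset[OF assms(1)] by simp
  then show "H \<subseteq> carrier GL3" using subgroup.subset[OF assms(2)] by auto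
  show "H \<noteq> {}" using subgroup.one_closed[OF assms(1)] by auto
  show "inv\<^bsub>GL3\<^esub> a \<in> H" if "a \<in> H" for a
    using subgroup.m_inv_closed[OF assms(1) that] GL.m_inv_consistent[OF assms(2)] hs that
    unfolding grp_def by auto
  show "a \<otimes>\<^bsub>GL3\<^esub> b \<in> H" if "a \<in> H" "b \<in> H" for a b
    using subgroup.m_closed[OF assms(1) that] by simp
qed

lemma sub_incl: "subgroup H GL3 \<Longrightarrow> subgroup G GL3 \<Longrightarrow> H \<subseteq> G \<Longrightarrow> subgroup H (grp G)"
  unfolding grp_def by (rule GL.subgroup_incl)

lemma transfer:
  assumes G: "subgroup G GL3" and G': "subgroup G' GL3"
    and iso: "\<phi> \<in> iso (grp G) (grp G')"
    and NG: "N \<subseteq> G" and KG: "K \<subseteq> G" and imN: "\<phi> ` N = N'" and imK: "\<phi> ` K = K'"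
    and nor: "N' \<lhd> grp G'" and sK: "subgroup K' (grp G')" and int: "N' \<inter> K' = {mat 1}"
    and prod: "N' <#>\<^bsub>grp G'\<^esub> K' = G'"
  shows "N \<lhd> grp G \<and> subgroup K (grp G) \<and> N \<inter> K = {mat 1} \<and> N <#>\<^bsub>grp G\<^esub> K = G"
proof -
  have gG: "group (grp G)" and gG': "group (grp G')" using G G' grp_group by auto
  define \<psi> where "\<psi> = inv_into G \<phi>"
  have inj: "inj_on \<phi> G" and im: "\<phi> ` G = G'" using iso unfolding iso_def bij_betw_def by auto
  have hom: "\<phi> \<in> hom (grp G) (grp G')" using iso unfolding iso_def by auto
  have mul: "\<phi> (x ** y) = \<phi> x ** \<phi> y" if "x \<in> G" "y \<in> G" for x y
    using hom that unfolding hom_def by auto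
  have psi: "\<psi> \<in> iso (grp G') (grp G)" unfolding \<psi>_def using group.iso_set_sym[OF gG iso] by simp
  have psiN: "\<psi> ` N' = N" and psiK: "\<psi> ` K' = K" unfolding \<psi>_def using imN imK NG KG inj by auto
  have gh: "group_hom (grp G') (grp G) \<psi>"
    using psi gG gG' unfolding group_hom_def group_hom_axioms_def iso_def by auto
  have n1: "N \<lhd> grp G" using iso_normal_subgroup[OF psi gG' gG nor] psiN by simp
  have s1: "subgroup K (grp G)" using group_hom.subgroup_img_is_subgroup[OF gh sK] psiK by simp
  have one: "mat 1 \<in> N" "mat 1 \<in> K"
    using subgroup.one_closed[OF normal_imp_subgroup[OF n1]] subgroup.one_closed[OF s1] by auto
  have phi1: "\<phi> (mat 1) = mat 1"
    using group_hom.hom_one[of "grp G" "grp G'" \<phi>] gG gG' hom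
    unfolding group_hom_def group_hom_axioms_def by simp
  have "N \<inter> K = {mat 1}"
  proof
    show "N \<inter> K \<subseteq> {mat 1}"
    proof
      fix x assume x: "x \<in> N \<inter> K"
      then have "\<phi> x \<in> N' \<inter> K'" using imN imK by auto
      then have "\<phi> x = \<phi> (mat 1)" using int phi1 by auto
      then show "x \<in> {mat 1}" using inj x one NG by (auto dest: inj_onD)
    qed
  qed (use one in auto)
  moreover have "N <#>\<^bsub>grp G\<^esub> K = G"
  proof
    show "N <#>\<^bsub>grp G\<^esub> K \<subseteq> G"
      using subgroup.m_closed[OF G] NG KG unfolding set_mult_def by auto
    show "G \<subseteq> N <#>\<^bsub>grp G\<^esub> K"
    proof
      fix g assume g: "g \<in> G"
      then have "\<phi> g \<in> N' <#>\<^bsub>grp G'\<^esub> K'" using prod im by auto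
      then obtain n k where nk: "n \<in> N" "k \<in> K" "\<phi> g = \<phi> n ** \<phi> k"
        unfolding set_mult_def imN[symmetric] imK[symmetric] by auto
      have nkG: "n ** k \<in> G" using nk NG KG subgroup.m_closed[OF G] by auto
      have "n \<in> G" "k \<in> G" using nk NG KG by auto
      then have "\<phi> g = \<phi> (n ** k)" using nk mul[of n k] by simp
      then have "g = n ** k" using inj g nkG by (auto dest: inj_onD)
      then show "g \<in> N <#>\<^bsub>grp G\<^esub> K" using nk unfolding set_mult_def by auto
    qed
  qed
  ultimately show ?thesis using n1 s1 by auto
qed


lemma Um_sq': "z ** Um ** Um = z"
  by (metis matrix_mul_assoc Um_sq matrix_mul_rid)

lemma cc_mult: "cc (x ** y) = cc x ** cc y"
  unfolding cc_def by (simp add: matrix_mul_assoc Um_sq')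

lemma cc_cc: "cc (cc x) = x"
  unfolding cc_def by (simp add: matrix_mul_assoc Um_sq' Um_sq matrix_mul_lid)

lemma Um_invertible: "invertible Um" using Um_sq unfolding invertible_def by auto

lemma cc_gh: "group_hom GL3 GL3 cc"
  unfolding group_hom_def group_hom_axioms_def
  by (auto simp: hom_def cc_mult group_GL3) (auto simp: cc_def invertible_mult Um_invertible)

lemma gen_cc: "S \<subseteq> carrier GL3 \<Longrightarrow> gen (cc ` S) = cc ` gen S"
  unfolding gen_def by (rule group_hom.generate_img[OF cc_gh])

lemma cc_inj: "inj cc" by (metis cc_cc injI)

section \<open>The entrywise power map\<close>

definition pwn :: "nat \<Rightarrow> cmat \<Rightarrow> cmat" where "pwn n M = (\<chi> i j. M$i$j ^ n)"

lemma pwn_mmon: "n > 0 \<Longrightarrow> pwn n (mmon p e) = mmon p (\<lambda>i. int n * e i)"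
  unfolding pwn_def mmon_def by (simp add: vec_eq_iff zz_pow)

lemma pwn_mult: "n > 0 \<Longrightarrow> pwn n (mmon p e ** mmon q f) = pwn n (mmon p e) ** pwn n (mmon q f)"
  by (simp add: pwn_mmon mmon_mult) (rule mmon_eqI, auto simp: algebra_simps)

definition "Jm = mmon (pm 3 2 1) (ev 0 0 0)"

lemma Jm_sq: "Jm ** Jm = mat 1"
  unfolding Jm_def mmon_pm_mult mmon_one' by (rule mmon_pm_eqI) auto

lemma Jm_sq': "z ** Jm ** Jm = z"
  by (metis matrix_mul_assoc Jm_sq matrix_mul_rid)

lemma Jm_Mon: "Jm \<in> MonSet" unfolding Jm_def MonSet_def using bij_pm[of 3 2 1] by auto

definition Phi0 :: "cmat \<Rightarrow> cmat" where "Phi0 M = Jm ** pwn 13 M ** Jm"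
definition Psi0 :: "cmat \<Rightarrow> cmat" where "Psi0 M = pwn 7 (Jm ** M ** Jm)"

lemma Mon_mult: "x \<in> MonSet \<Longrightarrow> y \<in> MonSet \<Longrightarrow> x ** y \<in> MonSet"
  using subgroup.m_closed[OF MonSet_subgroup] by simp

lemma Phi0_Mon: "x \<in> MonSet \<Longrightarrow> Phi0 x \<in> MonSet"
  unfolding Phi0_def using Jm_Mon Mon_mult
  by (auto simp: MonSet_def pwn_mmon) blast

lemma Phi0_mult: "x \<in> MonSet \<Longrightarrow> y \<in> MonSet \<Longrightarrow> Phi0 (x ** y) = Phi0 x ** Phi0 y"
  unfolding MonSet_def Phi0_def
  by (auto simp: pwn_mult matrix_mul_assoc Jm_sq')

lemma mod91: "(int 7 * (int 13 * x)) mod 18 = x mod 18" "(91 * x) mod 18 = x mod 18"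
  by (rule modI[where w = "5 * x"], simp)+

lemma Psi0_Phi0: "x \<in> MonSet \<Longrightarrow> Psi0 (Phi0 x) = x"
proof -
  assume "x \<in> MonSet"
  then obtain p e where x: "x = mmon p e" unfolding MonSet_def by auto
  have "Psi0 (Phi0 x) = pwn 7 (pwn 13 x)"
    unfolding Psi0_def Phi0_def by (simp add: matrix_mul_assoc Jm_sq' Jm_sq matrix_mul_lid)
  also have "\<dots> = x" unfolding x
    by (simp add: pwn_mmon, rule mmon_eqI, simp_all add: mod91)
  finally show ?thesis .
qed

lemma Phi0_inj: "inj_on Phi0 MonSet"
  by (metis Psi0_Phi0 inj_onI)

lemma Phi0_gh: "group_hom (grp MonSet) GL3 Phi0"
  unfolding group_hom_def group_hom_axioms_def
  using grp_group[OF MonSet_subgroup] Phi0_Mon subgroup.subset[OF MonSet_subgroup]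
  by (auto simp: hom_def Phi0_mult group_GL3)

lemma gen_Phi0: "S \<subseteq> MonSet \<Longrightarrow> gen (Phi0 ` S) = Phi0 ` gen S"
  unfolding gen_def
  using group_hom.generate_img[OF Phi0_gh, of S] GL.generate_consistent[OF _ MonSet_subgroup, of S]
  by (simp add: grp_def)

lemma Phi0_pm: "Phi0 (mmon (pm a b c) (ev x y z)) =
   Jm ** mmon (pm a b c) (ev (13*x) (13*y) (13*z)) ** Jm"
  unfolding Phi0_def by (simp add: pwn_mmon) (rule arg_cong[where f = "\<lambda>t. Jm ** t ** Jm"], rule mmon_eqI, auto simp: ev_def)


definition "P1 = mmon (pm 3 2 1) (ev 1 7 1)"
definition "P2 = mmon (pm 1 3 2) (ev 7 1 1)"
definition "F2m = mmon (pm 1 2 3) (ev 2 2 (-4))"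
definition "Xmm = mmon (pm 1 2 3) (ev 6 0 (-6))"
definition "m1i = mmon (pm 3 2 1) (ev 11 5 11)"
definition "Am' = mmon (pm 1 2 3) (ev 8 14 14)"
definition "m2sqi = mmon (pm 1 2 3) (ev 4 4 10)"

lemmas wdefs = P1_def P2_def F2m_def Xmm_def m1i_def Am'_def m2sqi_def m1_def m2_def Btm_def Emm_def E2m_def Jm_def


lemma P1_eq: "Phi0 m1 = P1" by (unfold m1_def P1_def Phi0_pm Jm_def, simp only: mmon_pm_mult pm_app ev_app Phi0_pm, rule mmon_pm_eqI, simp_all)
lemma P2_eq: "Phi0 m2 = P2" by (unfold m2_def P2_def Phi0_pm Jm_def, simp only: mmon_pm_mult pm_app ev_app Phi0_pm, rule mmon_pm_eqI, simp_all)

lemma w_F2: "F2m = P1 ** P1 ** P2 ** P1 ** P1 ** P1 ** P1 ** P2" by (unfold wdefs, simp only: mmon_pm_mult pm_app ev_app Phi0_pm, rule mmon_pm_eqI, simp_all)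
lemma w_E: "Emm = P1 ** P1 ** P1 ** P1 ** P1 ** P1 ** P1 ** P2 ** P1 ** P1 ** P1 ** P1" by (unfold wdefs, simp only: mmon_pm_mult pm_app ev_app Phi0_pm, rule mmon_pm_eqI, simp_all)
lemma w_Bt: "Btm = P1 ** P1 ** P1 ** P1 ** P1 ** P1 ** P2 ** P2 ** P2" by (unfold wdefs, simp only: mmon_pm_mult pm_app ev_app Phi0_pm, rule mmon_pm_eqI, simp_all)
lemma w_P1: "P1 = F2m ** F2m ** F2m ** Emm ** F2m ** F2m ** Btm" by (unfold wdefs, simp only: mmon_pm_mult pm_app ev_app Phi0_pm, rule mmon_pm_eqI, simp_all)
lemma w_P2: "P2 = F2m ** F2m ** F2m ** Emm ** Btm ** F2m ** F2m ** Emm" by (unfold wdefs, simp only: mmon_pm_mult pm_app ev_app Phi0_pm, rule mmon_pm_eqI, simp_all)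
lemma w_X: "Xmm = F2m ** F2m ** Btm ** F2m ** Btm" by (unfold wdefs, simp only: mmon_pm_mult pm_app ev_app Phi0_pm, rule mmon_pm_eqI, simp_all)
lemma w_Btm: "Btm = m1 ** m2 ** m1" by (unfold wdefs, simp only: mmon_pm_mult pm_app ev_app Phi0_pm, rule mmon_pm_eqI, simp_all)
lemma w_E2m: "E2m = m1 ** m1 ** m1 ** m1 ** m1 ** m1 ** m1 ** m2 ** m1 ** m1 ** m1 ** m1" by (unfold wdefs, simp only: mmon_pm_mult pm_app ev_app Phi0_pm, rule mmon_pm_eqI, simp_all)
lemma m1i_eq: "m1i ** m1 = mat 1" unfolding mmon_one' by (unfold wdefs, simp only: mmon_pm_mult pm_app ev_app Phi0_pm, rule mmon_pm_eqI, simp_all)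
lemma Am_eq: "Am' = m1 ** (m2 ** m2) ** m1i" by (unfold wdefs, simp only: mmon_pm_mult pm_app ev_app Phi0_pm, rule mmon_pm_eqI, simp_all)
lemma m2sqi_eq: "m2sqi ** (m2 ** m2) = mat 1" unfolding mmon_one' by (unfold wdefs, simp only: mmon_pm_mult pm_app ev_app Phi0_pm, rule mmon_pm_eqI, simp_all)


section \<open>The D9 side\<close>

lemma pm123: "pm 1 2 3 = id"
  unfolding pm_def using exhaust_3 by (auto simp: fun_eq_iff)

lemma pinv_id: "pinv id = id"
  unfolding pinv_def by (simp add: fun_eq_iff inv_into_def)

lemma mon_pm: "a \<noteq> b \<Longrightarrow> b \<noteq> c \<Longrightarrow> a \<noteq> c \<Longrightarrow> mmon (pm a b c) e \<in> MonSet"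
  unfolding MonSet_def using bij_pm by blast

lemma Mon_carrier: "MonSet \<subseteq> carrier GL3"
  using subgroup.subset[OF MonSet_subgroup] .

lemma in_Mon: "m1 \<in> MonSet" "m2 \<in> MonSet" "P1 \<in> MonSet" "P2 \<in> MonSet" "F2m \<in> MonSet"
  "Emm \<in> MonSet" "Btm \<in> MonSet" "Xmm \<in> MonSet" "E2m \<in> MonSet" "m1i \<in> MonSet"
  "Am' \<in> MonSet" "m2sqi \<in> MonSet"
  unfolding wdefs by (auto intro!: mon_pm)

lemma in_GL: "m1 \<in> carrier GL3" "m2 \<in> carrier GL3" "P1 \<in> carrier GL3" "P2 \<in> carrier GL3"
  "F2m \<in> carrier GL3" "Emm \<in> carrier GL3" "Btm \<in> carrier GL3" "Xmm \<in> carrier GL3"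
  "E2m \<in> carrier GL3" "m1i \<in> carrier GL3" "Am' \<in> carrier GL3" "m2sqi \<in> carrier GL3"
  using in_Mon Mon_carrier by auto

definition NP :: "cmat set" where
  "NP = {mmon id e | e. (\<forall>i j. (6::int) dvd e i - e j) \<and> (18::int) dvd sum e UNIV \<and> (2::int) dvd e 1}"

definition KP :: "cmat set" where
  "KP = {mmon p e | p e. bij p \<and> (\<forall>i. (18::int) dvd e i - e 1) \<and> (9::int) dvd e 1}"

lemma NP_sub: "subgroup NP GL3"
proof (rule GL.subgroupI)
  show "NP \<subseteq> carrier GL3" unfolding NP_def using mmon_invertible[of id] by auto
  have "mat 1 \<in> NP" unfolding NP_def mmon_one[symmetric] by auto
  then show "NP \<noteq> {}" by auto
  show "inv\<^bsub>GL3\<^esub> a \<in> NP" if "a \<in> NP" for a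
  proof -
    from that obtain e where a: "a = mmon id e" and c: "\<forall>i j. (6::int) dvd e i - e j"
       "(18::int) dvd sum e UNIV" "(2::int) dvd e 1" unfolding NP_def by auto
    have "inv\<^bsub>GL3\<^esub> a = mmon id (\<lambda>i. - e i)" unfolding a by (simp add: mmon_GLinv pinv_id)
    moreover have "\<forall>i j. (6::int) dvd (- e i) - (- e j)"
      using c(1) by (metis dvd_minus_iff minus_diff_eq diff_minus_eq_add add.commute diff_conv_add_uminus)
    moreover have "(18::int) dvd sum (\<lambda>i. - e i) UNIV" using c(2) by (simp add: sum_negf)
    moreover have "(2::int) dvd - e 1" using c(3) by simp
    ultimately show ?thesis unfolding NP_def by blast
  qed
  show "a \<otimes>\<^bsub>GL3\<^esub> b \<in> NP" if "a \<in> NP" "b \<in> NP" for a b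
  proof -
    from that obtain e f where a: "a = mmon id e" and c: "\<forall>i j. (6::int) dvd e i - e j"
       "(18::int) dvd sum e UNIV" "(2::int) dvd e 1"
      and b: "b = mmon id f" and d: "\<forall>i j. (6::int) dvd f i - f j"
       "(18::int) dvd sum f UNIV" "(2::int) dvd f 1" unfolding NP_def by auto
    have "a \<otimes>\<^bsub>GL3\<^esub> b = mmon id (\<lambda>i. e i + f i)" unfolding a b by (simp add: mmon_mult)
    moreover have "\<forall>i j. (6::int) dvd (e i + f i) - (e j + f j)"
    proof (intro allI)
      fix i j have "(e i + f i) - (e j + f j) = (e i - e j) + (f i - f j)" by simp
      then show "(6::int) dvd (e i + f i) - (e j + f j)" using c(1) d(1) by (metis dvd_add)
    qed
    moreover have "(18::int) dvd sum (\<lambda>i. e i + f i) UNIV" using c(2) d(2) by (simp add: sum.distrib)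
    moreover have "(2::int) dvd e 1 + f 1" using c(3) d(3) by simp
    ultimately show ?thesis unfolding NP_def by blast
  qed
qed

lemma pinv_app: "bij p \<Longrightarrow> pinv p (p i) = i"
  unfolding pinv_def by (simp add: bij_def inv_into_f_f)

lemma NP_conj: assumes x: "x \<in> MonSet" and h: "h \<in> NP"
  shows "x ** h ** inv\<^bsub>GL3\<^esub> x \<in> NP"
proof -
  from x obtain p f where xp: "x = mmon p f" "bij p" unfolding MonSet_def by auto
  from h obtain e where he: "h = mmon id e" and c: "\<forall>i j. (6::int) dvd e i - e j"
       "(18::int) dvd sum e UNIV" "(2::int) dvd e 1" unfolding NP_def by auto
  have "x ** h ** inv\<^bsub>GL3\<^esub> x = mmon id (\<lambda>i. e (p i))"
    unfolding xp he using xp(2)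
    by (simp add: mmon_GLinv mmon_mult) (rule mmon_eqI, auto simp: pinv_app fun_eq_iff)
  moreover have "\<forall>i j. (6::int) dvd e (p i) - e (p j)" using c(1) by auto
  moreover have "sum (\<lambda>i. e (p i)) UNIV = sum e UNIV"
    using sum.reindex[of p UNIV e] xp(2) by (simp add: bij_def)
  moreover have "(2::int) dvd e (p 1)"
  proof -
    have "(2::int) dvd 6" by simp
    then have "(2::int) dvd e (p 1) - e 1" using c(1) dvd_trans by blast
    then show ?thesis using c(3) by (metis dvd_add diff_add_cancel)
  qed
  ultimately show ?thesis using c(2) unfolding NP_def by auto
qed

lemma KP_sub: "subgroup KP GL3"
proof (rule GL.subgroupI)
  show "KP \<subseteq> carrier GL3" unfolding KP_def using mmon_invertible by auto
  have "mat 1 \<in> KP" unfolding KP_def mmon_one[symmetric]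
    by (rule CollectI, rule exI[of _ id], rule exI[of _ "\<lambda>_. 0"]) simp
  then show "KP \<noteq> {}" by auto
  show "inv\<^bsub>GL3\<^esub> a \<in> KP" if "a \<in> KP" for a
  proof -
    from that obtain p e where a: "a = mmon p e" "bij p" and c: "\<forall>i. (18::int) dvd e i - e 1"
       "(9::int) dvd e 1" unfolding KP_def by auto
    let ?g = "\<lambda>i. - e (pinv p i)"
    have "inv\<^bsub>GL3\<^esub> a = mmon (pinv p) ?g" unfolding a using a(2) by (simp add: mmon_GLinv)
    moreover have "\<forall>i. (18::int) dvd ?g i - ?g 1"
    proof
      fix i
      have "?g i - ?g 1 = (e (pinv p 1) - e 1) - (e (pinv p i) - e 1)" by simp
      then show "(18::int) dvd ?g i - ?g 1" using c(1) by (metis dvd_diff)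
    qed
    moreover have "(9::int) dvd ?g 1"
    proof -
      have "(9::int) dvd 18" by simp
      then have "(9::int) dvd e (pinv p 1) - e 1" using c(1) dvd_trans by blast
      then have "(9::int) dvd e (pinv p 1)" using c(2) by (metis dvd_add diff_add_cancel)
      then show ?thesis by simp
    qed
    ultimately show ?thesis unfolding KP_def using bij_pinv[OF a(2)] by blast
  qed
  show "a \<otimes>\<^bsub>GL3\<^esub> b \<in> KP" if "a \<in> KP" "b \<in> KP" for a b
  proof -
    from that obtain p e q f where a: "a = mmon p e" "bij p" and c: "\<forall>i. (18::int) dvd e i - e 1"
       "(9::int) dvd e 1" and b: "b = mmon q f" "bij q" and d: "\<forall>i. (18::int) dvd f i - f 1"
       "(9::int) dvd f 1" unfolding KP_def by auto
    let ?g = "\<lambda>i. e i + f (p i)"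
    have "a \<otimes>\<^bsub>GL3\<^esub> b = mmon (q \<circ> p) ?g" unfolding a b by (simp add: mmon_mult)
    moreover have "\<forall>i. (18::int) dvd ?g i - ?g 1"
    proof
      fix i
      have "?g i - ?g 1 = (e i - e 1) + (f (p i) - f 1) - (f (p 1) - f 1)" by simp
      then show "(18::int) dvd ?g i - ?g 1" using c(1) d(1) by (metis dvd_diff dvd_add)
    qed
    moreover have "(9::int) dvd ?g 1"
    proof -
      have "(9::int) dvd 18" by simp
      then have "(9::int) dvd f (p 1) - f 1" using d(1) dvd_trans by blast
      then have "(9::int) dvd f (p 1)" using d(2) by (metis dvd_add diff_add_cancel)
      then show ?thesis using c(2) by simp
    qed
    ultimately show ?thesis unfolding KP_def using bij_comp[OF a(2) b(2)] by blast
  qed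
qed

lemma det_mmon_diag: "det (mmon (pm 1 2 3) (ev x y z)) = zz x * zz y * zz z"
  unfolding mmon_mat3 by (simp add: det_3 mat3_nth)

lemma NP_KP: "NP \<inter> KP \<subseteq> {mat 1}"
proof
  fix x assume x: "x \<in> NP \<inter> KP"
  then obtain e where xe: "x = mmon id e" and c: "(18::int) dvd sum e UNIV" unfolding NP_def by auto
  from x obtain p f where xf: "x = mmon p f" and d: "\<forall>i. (18::int) dvd f i - f 1"
       "(9::int) dvd f 1" unfolding KP_def by auto
  have pid: "p = id" using mmon_perm_eq xe xf by metis
  have de: "det x = 1"
  proof -
    have "x = mmon (pm 1 2 3) (ev (e 1) (e 2) (e 3))" unfolding xe pm123
    proof (rule mmon_eqI)
      have "\<forall>i. e i mod 18 = ev (e 1) (e 2) (e 3) i mod 18" unfolding forall_3 by simp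
      then show "e i mod 18 = ev (e 1) (e 2) (e 3) i mod 18" for i by blast
    qed simp
    then have "det x = zz (e 1 + e 2 + e 3)" by (simp add: det_mmon_diag zz_mult)
    also have "\<dots> = zz 0" using c by (intro zz_cong) (simp add: sum_3)
    finally show ?thesis by simp
  qed
  obtain k where k: "f 1 = 9 * k" using d(2) by (auto elim: dvdE)
  show "x \<in> {mat 1}"
  proof (cases "even k")
    case True
    have "x = mmon id (\<lambda>_. 0)" unfolding xf pid
    proof (rule mmon_eqI)
      fix i
      have "(18::int) dvd f 1" using True k by auto
      then have "(18::int) dvd f i" using d(1) by (metis dvd_add diff_add_cancel)
      then show "f i mod 18 = 0 mod 18" by simp
    qed simp
    then show ?thesis by (simp add: mmon_one)
  next
    case False
    have f1: "f 1 = 18 * (k div 2) + 9" using False k by presburger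
    have ev9: "ev 9 9 9 = (\<lambda>_. 9)" unfolding ev_def by auto
    have "x = mmon (pm 1 2 3) (ev 9 9 9)" unfolding xf pid pm123 ev9
    proof (rule mmon_eqI)
      fix i
      obtain m where "f i - f 1 = 18 * m" using d(1) by (auto elim: dvdE)
      then have "f i = 9 + (m + k div 2) * 18" using f1 by simp
      then show "f i mod 18 = 9 mod 18" by (simp only: mod_mult_self1)
    qed simp
    then have "det x = -1" by (simp add: det_mmon_diag zz_9)
    then show ?thesis using de by simp
  qed
qed


lemma NP_I: "(\<forall>i j. (6::int) dvd e i - e j) \<Longrightarrow> (18::int) dvd sum e UNIV \<Longrightarrow> (2::int) dvd e 1 \<Longrightarrow> mmon id e \<in> NP"
  unfolding NP_def by blast

lemma KP_I: "bij p \<Longrightarrow> (\<forall>i. (18::int) dvd e i - e 1) \<Longrightarrow> (9::int) dvd e 1 \<Longrightarrow> mmon p e \<in> KP"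
  unfolding KP_def by blast

lemma pow_diag: "mmon (pm 1 2 3) (ev x y z) [^]\<^bsub>GL3\<^esub> (n::nat) = mmon (pm 1 2 3) (ev (int n * x) (int n * y) (int n * z))"
proof (induction n)
  case 0
  show ?case unfolding GL.nat_pow_0 by (simp add: mmon_one')
next
  case (Suc n)
  show ?case unfolding GL.nat_pow_Suc Suc by (simp add: mmon_pm_mult) (rule mmon_pm_eqI, simp_all add: algebra_simps)
qed

definition "N9 = gen {F2m, Xmm}"
definition "K9 = gen {Btm, Emm}"
definition "D9' = gen {F2m, Emm, Btm}"

lemma Fpp_inv: "matrix_inv Fpp = mmon (pm 1 2 3) (ev 2 (-1) (-1))"
proof -
  have b: "bij (pm 1 2 3)" by (rule bij_pm) auto
  have "matrix_inv Fpp = inv\<^bsub>GL3\<^esub> Fpp" unfolding Fpp_mmon using b by (intro matrix_inv_GL mmon_invertible)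
  also have "\<dots> = mmon (pm 1 2 3) (ev 2 (-1) (-1))" unfolding Fpp_mmon
    by (rule mmon_inv_pm[OF _ b b]) (unfold mmon_one' mmon_pm_mult, rule mmon_pm_eqI, simp_all)
  finally show ?thesis .
qed

lemma FF: "Fm ** Fm = F2m"
  unfolding Fm_mmon F2m_def mmon_pm_mult by (rule mmon_pm_eqI) simp_all

lemma Xm_eq: "Xm = Xmm"
  unfolding Xm_def Fpp_inv Fm_mmon Xmm_def mmon_pm_mult by (rule mmon_pm_eqI) simp_all

lemma F12X: "Fm [^]\<^bsub>GL3\<^esub> (12::nat) ** Xm = mmon (pm 1 2 3) (ev 0 12 6)"
  unfolding Fm_mmon pow_diag Xm_eq Xmm_def mmon_pm_mult by (rule mmon_pm_eqI) simp_all

lemma F12X_diag: "mmon (pm 1 2 3) (ev 0 12 6) = diag3 1 (- cis (pi/3)) (cis (2*pi/3))"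
  unfolding diag3_def mmon_mat3 cis_zz using zz_plus9[of 3] by simp

lemma D9_eq: "D9 = D9'" unfolding D9_def D9'_def FF Em_mmon Bt_mmon ..
lemma Nsub'_eq: "Nsub' = N9" unfolding Nsub'_def N9_def FF Xm_eq ..
lemma Ksub'_eq: "Ksub' = K9" unfolding Ksub'_def K9_def Bt_mmon Em_mmon ..

lemma D9_sub: "subgroup D9' GL3" unfolding D9'_def using in_GL by (intro gen_sub) auto
lemma N9_sub: "subgroup N9 GL3" unfolding N9_def using in_GL by (intro gen_sub) auto
lemma K9_sub: "subgroup K9 GL3" unfolding K9_def using in_GL by (intro gen_sub) auto

lemma D9_Mon: "D9' \<subseteq> MonSet" unfolding D9'_def using in_Mon by (intro gen_min[OF MonSet_subgroup]) auto

lemma Xmm_D9: "Xmm \<in> D9'" unfolding w_X D9'_def by (intro gen_mult gen_incl) auto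

lemma N9_D9: "N9 \<subseteq> D9'" unfolding N9_def using Xmm_D9
  by (intro gen_min[OF D9_sub]) (auto simp: D9'_def intro: gen_incl)
lemma K9_D9: "K9 \<subseteq> D9'" unfolding K9_def
  by (intro gen_min[OF D9_sub]) (auto simp: D9'_def intro: gen_incl)

lemma N9_NP: "N9 \<subseteq> NP"
proof -
  have "F2m \<in> NP" unfolding F2m_def pm123 by (rule NP_I) (simp_all add: forall_3 sum_3)
  moreover have "Xmm \<in> NP" unfolding Xmm_def pm123 by (rule NP_I) (simp_all add: forall_3 sum_3)
  ultimately show ?thesis unfolding N9_def by (intro gen_min[OF NP_sub]) auto
qed

lemma K9_KP: "K9 \<subseteq> KP"
proof -
  have "Btm \<in> KP" unfolding Btm_def by (rule KP_I) (simp_all add: forall_3 bij_pm)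
  moreover have "Emm \<in> KP" unfolding Emm_def by (rule KP_I) (simp_all add: forall_3 bij_pm)
  ultimately show ?thesis unfolding K9_def by (intro gen_min[OF KP_sub]) auto
qed

lemma NP_N9: "NP \<subseteq> N9"
proof
  fix x assume "x \<in> NP"
  then obtain e where x: "x = mmon id e" and c: "\<forall>i j. (6::int) dvd e i - e j"
       "(18::int) dvd sum e UNIV" "(2::int) dvd e 1" unfolding NP_def by auto
  have "(6::int) dvd e 1 - e 2" using c(1) by blast
  then obtain k where k: "e 1 - e 2 = 6 * k" by (auto elim: dvdE)
  obtain t where t: "e 1 = 2 * t" using c(3) by (auto elim: dvdE)
  define k2 where "k2 = t - 3 * k"
  have k2: "e 1 = 2 * k2 + 6 * k" using t unfolding k2_def by simp
  have e2: "e 2 = 2 * k2" using k k2 by simp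
  obtain s where s: "e 1 + e 2 + e 3 = 18 * s" using c(2) by (auto simp: sum_3 elim: dvdE)
  have e3: "e 3 = 18 * s - e 1 - e 2" using s by (simp add: algebra_simps)
  define q where "q = k2 div 9"
  define r where "r = k2 mod 9"
  define q' where "q' = k div 3"
  define r' where "r' = k mod 3"
  have qr: "k2 = 9 * q + r" "k = 3 * q' + r'" unfolding q_def r_def q'_def r'_def by simp_all
  have r0: "r \<ge> 0" "r' \<ge> 0" unfolding r_def r'_def by simp_all
  define a where "a = nat r"
  define b where "b = nat r'"
  have ia: "int a = r" unfolding a_def using r0 by simp
  have ib: "int b = r'" unfolding b_def using r0 by simp
  have "x = F2m [^]\<^bsub>GL3\<^esub> a ** Xmm [^]\<^bsub>GL3\<^esub> b"
  proof -
    have "x = mmon (pm 1 2 3) (ev (e 1) (e 2) (e 3))" unfolding x pm123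
    proof (rule mmon_eqI)
      have "\<forall>i. e i mod 18 = ev (e 1) (e 2) (e 3) i mod 18" unfolding forall_3 by simp
      then show "e i mod 18 = ev (e 1) (e 2) (e 3) i mod 18" for i by blast
    qed simp
    also have "\<dots> = F2m [^]\<^bsub>GL3\<^esub> a ** Xmm [^]\<^bsub>GL3\<^esub> b"
      unfolding F2m_def Xmm_def pow_diag mmon_pm_mult
    proof (rule mmon_pm_eqI)
      show "e 1 mod 18 = (int a * 2 + ev (int b * 6) (int b * 0) (int b * - 6) 1) mod 18"
        unfolding ev_app ia ib by (rule modI[where w = "q + q'"]) (use qr k2 in \<open>simp add: algebra_simps\<close>)
      show "e 2 mod 18 = (int a * 2 + ev (int b * 6) (int b * 0) (int b * - 6) 2) mod 18"
        unfolding ev_app ia ib by (rule modI[where w = "q"]) (use qr e2 in linarith)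
      show "e 3 mod 18 = (int a * - 4 + ev (int b * 6) (int b * 0) (int b * - 6) 3) mod 18"
        unfolding ev_app ia ib by (rule modI[where w = "s - 2 * q - q'"]) (use qr e2 k2 e3 in \<open>simp add: algebra_simps\<close>)
    qed simp_all
    finally show ?thesis .
  qed
  moreover have "F2m [^]\<^bsub>GL3\<^esub> a \<in> N9" "Xmm [^]\<^bsub>GL3\<^esub> b \<in> N9"
    using N9_sub by (auto intro!: sub_pow simp: N9_def intro: gen_incl)
  ultimately show "x \<in> N9" unfolding N9_def using gen_mult by auto
qed


lemma N9_eq: "N9 = NP" using N9_NP NP_N9 by auto

lemma one_in: "subgroup H GL3 \<Longrightarrow> mat 1 \<in> H"
  using subgroup.one_closed[of H GL3] by simp

lemma D9_facts: "N9 \<lhd> grp D9' \<and> subgroup K9 (grp D9') \<and> N9 \<inter> K9 = {mat 1} \<and> N9 <#>\<^bsub>grp D9'\<^esub> K9 = D9'"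
proof -
  have gD: "group (grp D9')" using grp_group[OF D9_sub] .
  have sN: "subgroup N9 (grp D9')" using sub_incl[OF N9_sub D9_sub N9_D9] .
  have sK: "subgroup K9 (grp D9')" using sub_incl[OF K9_sub D9_sub K9_D9] .
  have nor: "N9 \<lhd> grp D9'"
    unfolding group.normal_inv_iff[OF gD]
  proof (intro conjI ballI sN)
    fix x h assume x: "x \<in> carrier (grp D9')" and h: "h \<in> N9"
    have xD: "x \<in> D9'" using x by simp
    have "inv\<^bsub>grp D9'\<^esub> x = inv\<^bsub>GL3\<^esub> x"
      unfolding grp_def using GL.m_inv_consistent[OF D9_sub xD] .
    moreover have "x ** h ** inv\<^bsub>GL3\<^esub> x \<in> N9"
      using NP_conj[of x h] xD D9_Mon h N9_eq by auto
    ultimately show "x \<otimes>\<^bsub>grp D9'\<^esub> h \<otimes>\<^bsub>grp D9'\<^esub> inv\<^bsub>grp D9'\<^esub> x \<in> N9" by simp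
  qed
  have int: "N9 \<inter> K9 = {mat 1}"
    using NP_KP N9_eq K9_KP one_in[OF N9_sub] one_in[OF K9_sub] by auto
  have "second_isomorphism_grp N9 (grp D9') K9"
    using nor sK unfolding second_isomorphism_grp_def second_isomorphism_grp_axioms_def by auto
  then have sP: "subgroup (N9 <#>\<^bsub>grp D9'\<^esub> K9) (grp D9')"
    by (rule second_isomorphism_grp.normal_set_mult_subgroup)
  have sP': "subgroup (N9 <#>\<^bsub>grp D9'\<^esub> K9) GL3" using sub_sub[OF sP D9_sub] .
  have "D9' \<subseteq> N9 <#>\<^bsub>grp D9'\<^esub> K9"
  proof -
    have sm: "h ** k \<in> N9 <#>\<^bsub>grp D9'\<^esub> K9" if "h \<in> N9" "k \<in> K9" for h k
      using that unfolding set_mult_def by auto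
    have g: "F2m \<in> N9" "Emm \<in> K9" "Btm \<in> K9" by (auto simp: N9_def K9_def intro: gen_incl)
    have "F2m \<in> N9 <#>\<^bsub>grp D9'\<^esub> K9" using sm[OF g(1) one_in[OF K9_sub]] by (simp add: matrix_mul_rid)
    moreover have "Emm \<in> N9 <#>\<^bsub>grp D9'\<^esub> K9" using sm[OF one_in[OF N9_sub] g(2)] by (simp add: matrix_mul_lid)
    moreover have "Btm \<in> N9 <#>\<^bsub>grp D9'\<^esub> K9" using sm[OF one_in[OF N9_sub] g(3)] by (simp add: matrix_mul_lid)
    ultimately have "gen {F2m, Emm, Btm} \<subseteq> N9 <#>\<^bsub>grp D9'\<^esub> K9" by (intro gen_min[OF sP']) auto
    then show ?thesis by (simp only: D9'_def[symmetric])
  qed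
  moreover have "N9 <#>\<^bsub>grp D9'\<^esub> K9 \<subseteq> D9'"
    using N9_D9 K9_D9 subgroup.m_closed[OF D9_sub] unfolding set_mult_def by auto
  ultimately have "N9 <#>\<^bsub>grp D9'\<^esub> K9 = D9'" by auto
  then show ?thesis using nor sK int by auto
qed


section \<open>The Fr(162) side\<close>

definition "FrM = gen {m1, m2}"
definition "Bm' = m1 ** m2sqi ** m1"
definition "FXm = mmon (pm 1 2 3) (ev 0 12 6)"
definition "BtE = Btm ** Emm"
definition phi :: "cmat \<Rightarrow> cmat" where "phi x = Phi0 (cc x)"

lemma cc_carrier: "x \<in> carrier GL3 \<Longrightarrow> cc x \<in> carrier GL3"
  unfolding cc_def by (simp add: invertible_mult Um_invertible)

lemma Fr_eq: "Fr162 = cc ` FrM"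
  unfolding Fr162_def FrM_def G1_cc G2_cc using gen_cc[of "{m1, m2}"] in_GL by simp

lemma FrM_sub: "subgroup FrM GL3" unfolding FrM_def using in_GL by (intro gen_sub) auto
lemma FrM_Mon: "FrM \<subseteq> MonSet" unfolding FrM_def using in_Mon by (intro gen_min[OF MonSet_subgroup]) auto
lemma Fr_sub: "subgroup Fr162 GL3"
  unfolding Fr162_def G1_cc G2_cc using in_GL cc_carrier by (intro gen_sub) auto

lemma cc_inv: "x \<in> carrier GL3 \<Longrightarrow> inv\<^bsub>GL3\<^esub> (cc x) = cc (inv\<^bsub>GL3\<^esub> x)"
  using group_hom.hom_inv[OF cc_gh] by simp

lemma m1_inv: "inv\<^bsub>GL3\<^esub> m1 = m1i" using GL.inv_equality[of m1i m1] m1i_eq in_GL by simp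
lemma m2sq_inv: "inv\<^bsub>GL3\<^esub> (m2 ** m2) = m2sqi"
  using GL.inv_equality[of m2sqi "m2 ** m2"] m2sqi_eq in_GL GL.m_closed[of m2 m2] by simp

lemma Amat_cc: "Amat = cc Am'"
proof -
  have "matrix_inv G1 = cc m1i"
    unfolding G1_cc using cc_carrier[of m1] in_GL
    by (simp add: matrix_inv_GL cc_inv m1_inv)
  then show ?thesis unfolding Amat_def Am_eq by (simp add: G1_cc G2_cc cc_mult)
qed

lemma Bmat_cc: "Bmat = cc Bm'"
proof -
  have c: "m2 ** m2 \<in> carrier GL3" using in_GL GL.m_closed[of m2 m2] by simp
  have "matrix_inv (G2 ** G2) = cc m2sqi"
    unfolding G2_cc cc_mult[symmetric] using cc_carrier[OF c] c
    by (simp add: matrix_inv_GL cc_inv m2sq_inv)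
  then show ?thesis unfolding Bmat_def Bm'_def by (simp add: G1_cc cc_mult)
qed

lemma Phi0_Am: "Phi0 Am' = F2m"
  by (unfold Am'_def F2m_def Phi0_pm Jm_def, simp only: mmon_pm_mult pm_app ev_app, rule mmon_pm_eqI, simp_all)
lemma Bm_eq: "Bm' = mmon (pm 1 2 3) (ev 6 12 0)"
  by (unfold Bm'_def wdefs, simp only: mmon_pm_mult pm_app ev_app, rule mmon_pm_eqI, simp_all)
lemma Phi0_Bm: "Phi0 Bm' = FXm"
  by (unfold Bm_eq FXm_def Phi0_pm Jm_def, simp only: mmon_pm_mult pm_app ev_app, rule mmon_pm_eqI, simp_all)
lemma Phi0_Btm: "Phi0 Btm = BtE"
  by (unfold BtE_def Btm_def Emm_def Phi0_pm Jm_def, simp only: mmon_pm_mult pm_app ev_app, rule mmon_pm_eqI, simp_all)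
lemma Phi0_E2m: "Phi0 E2m = Emm"
  by (unfold E2m_def Emm_def Phi0_pm Jm_def, simp only: mmon_pm_mult pm_app ev_app, rule mmon_pm_eqI, simp_all)

lemma w_X2: "Xmm = F2m ** F2m ** F2m ** FXm"
  by (unfold wdefs FXm_def, simp only: mmon_pm_mult pm_app ev_app, rule mmon_pm_eqI, simp_all)
lemma w_FX: "FXm = F2m ** F2m ** F2m ** F2m ** F2m ** F2m ** Xmm"
  by (unfold wdefs FXm_def, simp only: mmon_pm_mult pm_app ev_app, rule mmon_pm_eqI, simp_all)
lemma w_Bt2: "Btm = BtE ** Emm ** Emm"
  by (unfold wdefs BtE_def, simp only: mmon_pm_mult pm_app ev_app, rule mmon_pm_eqI, simp_all)

lemma more_Mon: "Bm' \<in> MonSet" "FXm \<in> MonSet" "BtE \<in> MonSet"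
  unfolding Bm_eq FXm_def BtE_def Btm_def Emm_def mmon_pm_mult by (auto intro!: mon_pm)

lemma more_GL: "Bm' \<in> carrier GL3" "FXm \<in> carrier GL3" "BtE \<in> carrier GL3"
  using more_Mon Mon_carrier by auto

lemma FrM_mem: "Am' \<in> FrM" "Bm' \<in> FrM" "Btm \<in> FrM" "E2m \<in> FrM"
proof -
  have a: "m1 \<in> FrM" "m2 \<in> FrM" unfolding FrM_def by (auto intro: gen_incl)
  have b: "m1i \<in> FrM" using subgroup.m_inv_closed[OF FrM_sub a(1)] m1_inv by simp
  have c: "m2sqi \<in> FrM" using subgroup.m_inv_closed[OF FrM_sub, of "m2 ** m2"] m2sq_inv a
    unfolding FrM_def using gen_mult by auto
  show "Am' \<in> FrM" unfolding Am_eq using a b unfolding FrM_def by (intro gen_mult) auto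
  show "Bm' \<in> FrM" unfolding Bm'_def using a c unfolding FrM_def by (intro gen_mult) auto
  show "Btm \<in> FrM" unfolding w_Btm using a unfolding FrM_def by (intro gen_mult) auto
  show "E2m \<in> FrM" unfolding w_E2m using a unfolding FrM_def by (intro gen_mult) auto
qed

lemma phi_img: "phi ` Fr162 = D9'"
proof -
  have "phi ` Fr162 = Phi0 ` FrM" unfolding Fr_eq phi_def image_image cc_cc by simp
  also have "\<dots> = gen {P1, P2}" unfolding FrM_def using gen_Phi0[of "{m1, m2}"] in_Mon P1_eq P2_eq by simp
  also have "\<dots> = D9'" unfolding D9'_def
  proof (rule gen_eqI)
    show "{P1, P2} \<subseteq> gen {F2m, Emm, Btm}" unfolding w_P1 w_P2 by (auto intro!: gen_mult intro: gen_incl)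
    show "{F2m, Emm, Btm} \<subseteq> gen {P1, P2}" unfolding w_F2 w_E w_Bt by (auto intro!: gen_mult intro: gen_incl)
  qed (use in_GL in auto)
  finally show ?thesis .
qed

lemma phi_inj: "inj_on phi Fr162"
proof (rule inj_onI)
  fix x y assume "x \<in> Fr162" "y \<in> Fr162" "phi x = phi y"
  then have "cc x \<in> FrM" "cc y \<in> FrM" "Phi0 (cc x) = Phi0 (cc y)"
    unfolding Fr_eq phi_def by (auto simp: cc_cc)
  then have "cc x = cc y" using Phi0_inj FrM_Mon by (auto dest: inj_onD)
  then show "x = y" by (metis cc_cc)
qed

lemma phi_mult: assumes "x \<in> Fr162" "y \<in> Fr162" shows "phi (x ** y) = phi x ** phi y"
proof -
  have "cc x \<in> MonSet" "cc y \<in> MonSet" using assms FrM_Mon unfolding Fr_eq by (auto simp: cc_cc)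
  then show ?thesis unfolding phi_def cc_mult by (rule Phi0_mult)
qed

lemma phi_iso: "phi \<in> iso (grp Fr162) (grp D9')"
  unfolding iso_def hom_def bij_betw_def using phi_img phi_inj phi_mult by auto

lemma Nsub_eq: "Nsub = cc ` gen {Am', Bm'}"
  unfolding Nsub_def Amat_cc Bmat_cc using gen_cc[of "{Am', Bm'}"] in_GL more_GL by simp
lemma Ksub_eq: "Ksub = cc ` gen {Btm, E2m}"
  unfolding Ksub_def H1_cc H3_cc using gen_cc[of "{Btm, E2m}"] in_GL by simp

lemma Nsub_Fr: "Nsub \<subseteq> Fr162"
  unfolding Nsub_eq Fr_eq using FrM_mem by (intro image_mono gen_min[OF FrM_sub]) auto
lemma Ksub_Fr: "Ksub \<subseteq> Fr162"
  unfolding Ksub_eq Fr_eq using FrM_mem by (intro image_mono gen_min[OF FrM_sub]) auto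

lemma phi_N: "phi ` Nsub = N9"
proof -
  have "phi ` Nsub = Phi0 ` gen {Am', Bm'}" unfolding Nsub_eq phi_def image_image cc_cc by simp
  also have "\<dots> = gen {F2m, FXm}" using gen_Phi0[of "{Am', Bm'}"] in_Mon more_Mon Phi0_Am Phi0_Bm by simp
  also have "\<dots> = N9" unfolding N9_def
  proof (rule gen_eqI)
    show "{F2m, FXm} \<subseteq> gen {F2m, Xmm}" unfolding w_FX by (auto intro!: gen_mult intro: gen_incl)
    show "{F2m, Xmm} \<subseteq> gen {F2m, FXm}" unfolding w_X2 by (auto intro!: gen_mult intro: gen_incl)
  qed (use in_GL more_GL in auto)
  finally show ?thesis .
qed

lemma phi_K: "phi ` Ksub = K9"
proof -
  have "phi ` Ksub = Phi0 ` gen {Btm, E2m}" unfolding Ksub_eq phi_def image_image cc_cc by simp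
  also have "\<dots> = gen {BtE, Emm}" using gen_Phi0[of "{Btm, E2m}"] in_Mon Phi0_Btm Phi0_E2m by simp
  also have "\<dots> = K9" unfolding K9_def
  proof (rule gen_eqI)
    show "{BtE, Emm} \<subseteq> gen {Btm, Emm}" unfolding BtE_def by (auto intro!: gen_mult intro: gen_incl)
    show "{Btm, Emm} \<subseteq> gen {BtE, Emm}" unfolding w_Bt2 by (auto intro!: gen_mult intro: gen_incl)
  qed (use in_GL more_GL in auto)
  finally show ?thesis .
qed


lemma D9_gen4: "D9' = gen {Fm ** Fm, Xm, Bt, Em}"
  unfolding D9'_def FF Xm_eq Bt_mmon Em_mmon
proof (rule gen_eqI)
  show "{F2m, Emm, Btm} \<subseteq> gen {F2m, Xmm, Btm, Emm}" by (auto intro: gen_incl)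
  show "{F2m, Xmm, Btm, Emm} \<subseteq> gen {F2m, Emm, Btm}" unfolding w_X by (auto intro!: gen_mult intro: gen_incl)
qed (use in_GL in auto)

theorem theorem6:
  shows "Fm [^]\<^bsub>GL3\<^esub> (12::nat) ** Xm = diag3 1 (- cis (pi/3)) (cis (2*pi/3))
    \<and> Nsub \<lhd> grp Fr162 \<and> subgroup Ksub (grp Fr162)
    \<and> Nsub \<inter> Ksub = {mat 1} \<and> Nsub <#>\<^bsub>grp Fr162\<^esub> Ksub = Fr162
    \<and> D9 = gen {Fm ** Fm, Xm, Bt, Em}
    \<and> Nsub' \<lhd> grp D9 \<and> subgroup Ksub' (grp D9)
    \<and> Nsub' \<inter> Ksub' = {mat 1} \<and> Nsub' <#>\<^bsub>grp D9\<^esub> Ksub' = D9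
    \<and> (\<exists>\<phi>. \<phi> \<in> iso (grp Fr162) (grp D9)
         \<and> \<phi> Amat = Fm ** Fm
         \<and> \<phi> Bmat = Fm [^]\<^bsub>GL3\<^esub> (12::nat) ** Xm
         \<and> \<phi> H1 = Bt ** Em
         \<and> \<phi> H3 = Em)
    \<and> grp Fr162 \<cong> grp D9"
proof -
  have D: "N9 \<lhd> grp D9' \<and> subgroup K9 (grp D9') \<and> N9 \<inter> K9 = {mat 1} \<and> N9 <#>\<^bsub>grp D9'\<^esub> K9 = D9'"
    by (rule D9_facts)
  have F: "Nsub \<lhd> grp Fr162 \<and> subgroup Ksub (grp Fr162) \<and> Nsub \<inter> Ksub = {mat 1} \<and> Nsub <#>\<^bsub>grp Fr162\<^esub> Ksub = Fr162"
    using D by (intro transfer[OF Fr_sub D9_sub phi_iso Nsub_Fr Ksub_Fr phi_N phi_K]) auto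
  have e1: "Fm [^]\<^bsub>GL3\<^esub> (12::nat) ** Xm = diag3 1 (- cis (pi/3)) (cis (2*pi/3))"
    using F12X F12X_diag by simp
  have ph: "phi Amat = Fm ** Fm \<and> phi Bmat = Fm [^]\<^bsub>GL3\<^esub> (12::nat) ** Xm \<and> phi H1 = Bt ** Em \<and> phi H3 = Em"
    unfolding phi_def Amat_cc Bmat_cc H1_cc H3_cc cc_cc Phi0_Am Phi0_Bm Phi0_Btm Phi0_E2m
      F12X FF BtE_def Bt_mmon Em_mmon FXm_def by simp
  have iso: "phi \<in> iso (grp Fr162) (grp D9)" using phi_iso D9_eq by simp
  show ?thesis
    unfolding D9_eq[symmetric] Nsub'_eq[symmetric] Ksub'_eq[symmetric]
    using D[unfolded D9_eq[symmetric] Nsub'_eq[symmetric] Ksub'_eq[symmetric]] F e1 ph iso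
      D9_gen4 D9_eq is_isoI[OF iso] by auto
qed

end
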